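(* Let $D$ be a discrete space, $M$ a Hausdorff space and $\pi:D\to M$ a map. Then $D\cup_\pi M$ is countably pracompact if and only if $M$ is countably compact at some dense subset $A\subset M$ with $A\supset\pi(D)$.
   Context: For a discrete space $D$: if $D$ is infinite, $\alpha D=D\cup\{\infty\}$ denotes its one-point (Aleksandrov) compactification; if $D$ is finite, $\alpha D=D\cup\{\infty\}$ is the topological sum of $D$ and a singleton $\{\infty\}$ with $\infty\notin D$. For a map $\pi:D\to M$ into a $T_1$ space $M$, $D\cup_\pi M$ is the subspace $\{(x,\pi(x)):x\in D\}\cup(\{\infty\}\times M)$ of $\alpha D\times M$. A space $X$ is countably compact at a subset $A\subset X$ if every infinite subset $B\subset A$ has an accumulation point in $X$ (a point each neighborhood of which contains infinitely many points of $B$). A space $X$ is countably pracompact if it is countably compact at some dense subset of $X$. *)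

theory Defs
  imports "HOL-Analysis.Analysis"
begin

text \<open>The point \<open>\<infinity>\<close> is represented by \<open>None\<close>, points of D by \<open>Some d\<close>.
  alpha D: one-point compactification of the discrete space D if D is infinite,
  topological sum of the discrete D and a singleton otherwise (then discrete).\<close>

definition alpha_topology :: "'a set \<Rightarrow> 'a option topology" where
  "alpha_topology D =
     (if infinite D
      then topology (\<lambda>U. U \<subseteq> insert None (Some ` D) \<and>
                         (None \<in> U \<longrightarrow> finite (insert None (Some ` D) - U)))
      else discrete_topology (insert None (Some ` D)))"

text \<open>The space D \<union>_\<pi> M as a subspace of alpha D \<times> M.\<close>

definition glue_space :: "'a set \<Rightarrow> ('a \<Rightarrow> 'b) \<Rightarrow> 'b topology \<Rightarrow> ('a option \<times> 'b) topology" where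
  "glue_space D \<pi> M =
     subtopology (prod_topology (alpha_topology D) M)
       ((\<lambda>x. (Some x, \<pi> x)) ` D \<union> ({None} \<times> topspace M))"

definition countably_compact_at :: "'a topology \<Rightarrow> 'a set \<Rightarrow> bool" where
  "countably_compact_at X A \<longleftrightarrow>
     (\<forall>B. B \<subseteq> A \<and> infinite B \<longrightarrow>
        (\<exists>x\<in>topspace X. \<forall>U. openin X U \<and> x \<in> U \<longrightarrow> infinite (U \<inter> B)))"

definition countably_pracompact :: "'a topology \<Rightarrow> bool" where
  "countably_pracompact X \<longleftrightarrow>
     (\<exists>A. A \<subseteq> topspace X \<and> X closure_of A = topspace X \<and> countably_compact_at X A)"

end

theory Submission
  imports Defs
begin

lemma alpha_istop:
  "istopology (\<lambda>U. U \<subseteq> insert None (Some ` D) \<and>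
                         (None \<in> U \<longrightarrow> finite (insert None (Some ` D) - U)))"
  unfolding istopology_def
proof (rule conjI)
  show "\<forall>S T. S \<subseteq> insert None (Some ` D) \<and> (None \<in> S \<longrightarrow> finite (insert None (Some ` D) - S)) \<longrightarrow>
     T \<subseteq> insert None (Some ` D) \<and> (None \<in> T \<longrightarrow> finite (insert None (Some ` D) - T)) \<longrightarrow>
     S \<inter> T \<subseteq> insert None (Some ` D) \<and> (None \<in> S \<inter> T \<longrightarrow> finite (insert None (Some ` D) - S \<inter> T))"
  proof (intro allI impI)
    fix S T :: "'a option set"
    assume a: "S \<subseteq> insert None (Some ` D) \<and> (None \<in> S \<longrightarrow> finite (insert None (Some ` D) - S))"
       "T \<subseteq> insert None (Some ` D) \<and> (None \<in> T \<longrightarrow> finite (insert None (Some ` D) - T))"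
    have "insert None (Some ` D) - (S \<inter> T) = (insert None (Some ` D) - S) \<union> (insert None (Some ` D) - T)"
      by blast
    then show "S \<inter> T \<subseteq> insert None (Some ` D) \<and>
           (None \<in> S \<inter> T \<longrightarrow> finite (insert None (Some ` D) - S \<inter> T))"
      using a by (metis (no_types, lifting) Int_iff finite_UnI le_infI1)
  qed
next
  show "\<forall>K. (\<forall>S\<in>K. S \<subseteq> insert None (Some ` D) \<and> (None \<in> S \<longrightarrow> finite (insert None (Some ` D) - S))) \<longrightarrow>
     \<Union> K \<subseteq> insert None (Some ` D) \<and> (None \<in> \<Union> K \<longrightarrow> finite (insert None (Some ` D) - \<Union> K))"
  proof (intro allI impI)
    fix K :: "'a option set set"
    assume a: "\<forall>S\<in>K. S \<subseteq> insert None (Some ` D) \<and> (None \<in> S \<longrightarrow> finite (insert None (Some ` D) - S))"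
    show "\<Union> K \<subseteq> insert None (Some ` D) \<and> (None \<in> \<Union> K \<longrightarrow> finite (insert None (Some ` D) - \<Union> K))"
    proof (intro conjI impI)
      show "\<Union> K \<subseteq> insert None (Some ` D)" using a by blast
      assume "None \<in> \<Union> K"
      then obtain S where "S \<in> K" "None \<in> S" by blast
      then show "finite (insert None (Some ` D) - \<Union> K)"
        using a by (meson Diff_mono Union_upper finite_subset order_refl)
    qed
  qed
qed

lemma alpha_topspace: "topspace (alpha_topology D) = insert None (Some ` D)"
proof (cases "finite D")
  case False
  have "openin (alpha_topology D) = (\<lambda>U. U \<subseteq> insert None (Some ` D) \<and>
                         (None \<in> U \<longrightarrow> finite (insert None (Some ` D) - U)))"
    using False alpha_istop[of D] by (simp add: alpha_topology_def)
  then have 1: "openin (alpha_topology D) (insert None (Some ` D))"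
    and 2: "\<And>U. openin (alpha_topology D) U \<Longrightarrow> U \<subseteq> insert None (Some ` D)" by simp_all
  show ?thesis using 1 2[OF openin_topspace] openin_subset[OF 1] by (rule_tac subset_antisym)
qed (simp add: alpha_topology_def)

lemma alpha_open_single: "d \<in> D \<Longrightarrow> openin (alpha_topology D) {Some d}"
proof (cases "finite D")
  case False
  assume "d \<in> D"
  have "openin (alpha_topology D) = (\<lambda>U. U \<subseteq> insert None (Some ` D) \<and>
                         (None \<in> U \<longrightarrow> finite (insert None (Some ` D) - U)))"
    using False alpha_istop[of D] by (simp add: alpha_topology_def)
  then show ?thesis using \<open>d \<in> D\<close> by auto
qed (simp add: alpha_topology_def)

lemma alpha_open_None:
  assumes "openin (alpha_topology D) W" "None \<in> W"
  shows "finite {d\<in>D. Some d \<notin> W}"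
proof (cases "finite D")
  case False
  have "openin (alpha_topology D) = (\<lambda>U. U \<subseteq> insert None (Some ` D) \<and>
                         (None \<in> U \<longrightarrow> finite (insert None (Some ` D) - U)))"
    using False alpha_istop[of D] by (simp add: alpha_topology_def)
  then have "finite (insert None (Some ` D) - W)" using assms by auto
  then have "finite (the ` (insert None (Some ` D) - W))" by simp
  moreover have "{d\<in>D. Some d \<notin> W} \<subseteq> the ` (insert None (Some ` D) - W)"
  proof
    fix d assume "d \<in> {d\<in>D. Some d \<notin> W}"
    then have "Some d \<in> insert None (Some ` D) - W" by blast
    then show "d \<in> the ` (insert None (Some ` D) - W)" by (metis image_eqI option.sel)
  qed
  ultimately show ?thesis by (rule finite_subset[rotated])
qed simp

theorem proposition1p6:
  fixes D :: "'a set" and M :: "'b topology" and \<pi> :: "'a \<Rightarrow> 'b"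
  assumes "Hausdorff_space M"
    and "\<pi> ` D \<subseteq> topspace M"
  shows "countably_pracompact (glue_space D \<pi> M) \<longleftrightarrow>
         (\<exists>A. A \<subseteq> topspace M \<and> M closure_of A = topspace M \<and> \<pi> ` D \<subseteq> A
              \<and> countably_compact_at M A)"
proof -
  define T where "T = alpha_topology D"
  define S0 where "S0 = (\<lambda>x. (Some x, \<pi> x)) ` D \<union> ({None} \<times> topspace M)"
  define X where "X = glue_space D \<pi> M"
  have X_def': "X = subtopology (prod_topology T M) S0"
    unfolding X_def glue_space_def T_def S0_def ..
  have tT: "topspace T = insert None (Some ` D)" unfolding T_def by (rule alpha_topspace)
  have tX: "topspace X = S0"
  proof -
    have "S0 \<subseteq> topspace T \<times> topspace M" unfolding S0_def tT using assms(2) by blast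
    then show ?thesis unfolding X_def' topspace_subtopology topspace_prod_topology by blast
  qed
  have oX: "openin X (S0 \<inter> (W \<times> V))" if "openin T W" "openin M V" for W V
  proof -
    have "openin (prod_topology T M) (W \<times> V)" using that by (simp add: openin_prod_Times_iff)
    then show ?thesis unfolding X_def' openin_subtopology
      by (intro exI[of _ "W \<times> V"]) (simp add: Int_commute)
  qed
  have nb: "\<exists>W V. openin T W \<and> openin M V \<and> p \<in> W \<times> V \<and> S0 \<inter> (W \<times> V) \<subseteq> U"
    if U: "openin X U" and pU: "p \<in> U" for U p
  proof -
    obtain G where G: "openin (prod_topology T M) G" "U = G \<inter> S0"
      using U unfolding X_def' openin_subtopology by blast
    obtain a b where p: "p = (a, b)" by (cases p) simp
    then have ab: "(a, b) \<in> G" using pU G(2) by simp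
    have "\<exists>W V. openin T W \<and> openin M V \<and> a \<in> W \<and> b \<in> V \<and> W \<times> V \<subseteq> G"
      using G(1) ab unfolding openin_prod_topology_alt by simp
    then obtain W V where WV: "openin T W" "openin M V" "a \<in> W" "b \<in> V" "W \<times> V \<subseteq> G"
      by blast
    have "S0 \<inter> (W \<times> V) \<subseteq> U" using WV(5) G(2) by blast
    then show ?thesis using WV p by blast
  qed
  have iso: "S0 \<inter> ({Some d} \<times> topspace M) = {(Some d, \<pi> d)}" if dD: "d \<in> D" for d
  proof (rule set_eqI)
    fix z show "z \<in> S0 \<inter> ({Some d} \<times> topspace M) \<longleftrightarrow> z \<in> {(Some d, \<pi> d)}"
      using dD assms(2) unfolding S0_def by (cases z) auto
  qed
  have isoo: "openin X {(Some d, \<pi> d)}" if "d \<in> D" for d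
    using oX[OF alpha_open_single[OF that, folded T_def] openin_topspace[of M]] iso[OF that] by simp
  have K: "\<exists>m\<in>topspace M. p = (None, m) \<and> (\<forall>V. openin M V \<and> m \<in> V \<longrightarrow> infinite (B' \<inter> (UNIV \<times> V)))"
    if pX: "p \<in> topspace X" and acc: "\<forall>U. openin X U \<and> p \<in> U \<longrightarrow> infinite (U \<inter> B')" for p B'
  proof -
    have pS: "p \<in> S0" using pX tX by simp
    then consider d where "d \<in> D" "p = (Some d, \<pi> d)" | m where "m \<in> topspace M" "p = (None, m)"
      unfolding S0_def by blast
    then show ?thesis
    proof cases
      case 1
      then have "infinite ({(Some d, \<pi> d)} \<inter> B')" using acc isoo by blast
      then show ?thesis using finite_Int[of "{(Some d, \<pi> d)}" B'] by simp
    next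
      case 2
      show ?thesis
      proof (intro bexI conjI allI impI)
        fix V assume V: "openin M V \<and> m \<in> V"
        have o: "openin X (S0 \<inter> (topspace T \<times> V))" using oX V by simp
        have "p \<in> S0 \<inter> (topspace T \<times> V)" using 2 pS tT V by simp
        then have "infinite ((S0 \<inter> (topspace T \<times> V)) \<inter> B')" using acc o by blast
        then show "infinite (B' \<inter> (UNIV \<times> V))" by (rule infinite_super[rotated]) blast
      qed (use 2 in auto)
    qed
  qed
  have Kc: "\<forall>U. openin X U \<and> (None, m) \<in> U \<longrightarrow> infinite (U \<inter> B')"
    if mM: "m \<in> topspace M"
      and H: "\<And>W V. openin T W \<Longrightarrow> None \<in> W \<Longrightarrow> openin M V \<Longrightarrow> m \<in> V \<Longrightarrow> infinite (S0 \<inter> (W \<times> V) \<inter> B')"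
    for m B'
  proof (intro allI impI)
    fix U assume U: "openin X U \<and> (None, m) \<in> U"
    then obtain W V where WV: "openin T W" "openin M V" "(None, m) \<in> W \<times> V" "S0 \<inter> (W \<times> V) \<subseteq> U"
      using nb[of U "(None, m)"] by blast
    then have "infinite (S0 \<inter> (W \<times> V) \<inter> B')" using H by blast
    then show "infinite (U \<inter> B')" by (rule infinite_super[rotated]) (use WV in blast)
  qed
  show ?thesis unfolding X_def[symmetric] countably_pracompact_def
  proof
    assume "\<exists>B. B \<subseteq> topspace X \<and> X closure_of B = topspace X \<and> countably_compact_at X B"
    then obtain B where B: "B \<subseteq> topspace X" "X closure_of B = topspace X" "countably_compact_at X B"
      by blast
    have inB: "(Some d, \<pi> d) \<in> B" if dD: "d \<in> D" for d
    proof -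
      have "(Some d, \<pi> d) \<in> S0" unfolding S0_def using dD by blast
      then have "(Some d, \<pi> d) \<in> X closure_of B" using B(2) tX by simp
      then show ?thesis using isoo[OF dD] unfolding in_closure_of by blast
    qed
    define A where "A = {m. (None, m) \<in> B} \<union> \<pi> ` D"
    show "\<exists>A. A \<subseteq> topspace M \<and> M closure_of A = topspace M \<and> \<pi> ` D \<subseteq> A \<and> countably_compact_at M A"
    proof (intro exI conjI)
      show A_sub: "A \<subseteq> topspace M" using B(1) tX assms(2) unfolding A_def S0_def by blast
      show "\<pi> ` D \<subseteq> A" unfolding A_def by blast
      show "M closure_of A = topspace M"
      proof (rule subset_antisym)
        show "M closure_of A \<subseteq> topspace M" by (rule closure_of_subset_topspace)
        show "topspace M \<subseteq> M closure_of A"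
        proof
          fix m assume m: "m \<in> topspace M"
          show "m \<in> M closure_of A" unfolding in_closure_of
          proof (intro conjI allI impI)
            show "m \<in> topspace M" by fact
            fix V assume V: "m \<in> V \<and> openin M V"
            have o: "openin X (S0 \<inter> (topspace T \<times> V))" using oX V by simp
            have mS0: "(None, m) \<in> S0" unfolding S0_def using m by blast
            then have mSV: "(None, m) \<in> S0 \<inter> (topspace T \<times> V)" using V tT by simp
            have "(None, m) \<in> X closure_of B" using mS0 B(2) tX by simp
            then have "\<forall>U. (None, m) \<in> U \<and> openin X U \<longrightarrow> (\<exists>y. y \<in> B \<and> y \<in> U)"
              unfolding in_closure_of by (elim conjE)
            from this[rule_format, OF conjI[OF mSV o]]
            have "\<exists>y. y \<in> B \<and> y \<in> S0 \<inter> (topspace T \<times> V)" .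
            then obtain y where y: "y \<in> B" "y \<in> S0" "y \<in> topspace T \<times> V" by blast
            from y(2) consider d where "d \<in> D" "y = (Some d, \<pi> d)" | m' where "y = (None, m')"
              unfolding S0_def by blast
            then show "\<exists>y. y \<in> A \<and> y \<in> V"
            proof cases
              case 1 then show ?thesis using y(3) unfolding A_def by auto
            next
              case 2 then show ?thesis using y(1,3) unfolding A_def by auto
            qed
          qed
        qed
      qed
      show "countably_compact_at M A" unfolding countably_compact_at_def
      proof (intro allI impI)
        fix S assume S: "S \<subseteq> A \<and> infinite S"
        define S1 where "S1 = {m\<in>S. (None, m) \<in> B}"
        define S2 where "S2 = S \<inter> \<pi> ` D"
        have "S = S1 \<union> S2" using S unfolding S1_def S2_def A_def by blast
        then have "infinite S1 \<or> infinite S2" using S by (metis finite_Un)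
        then show "\<exists>x\<in>topspace M. \<forall>U. openin M U \<and> x \<in> U \<longrightarrow> infinite (U \<inter> S)"
        proof
          assume inf1: "infinite S1"
          define B' where "B' = (\<lambda>m. (None :: 'a option, m)) ` S1"
          have "B' \<subseteq> B" unfolding B'_def S1_def by blast
          moreover have "infinite B'" unfolding B'_def using inf1 by (simp add: finite_image_iff inj_on_def)
          ultimately obtain p where p: "p \<in> topspace X" "\<forall>U. openin X U \<and> p \<in> U \<longrightarrow> infinite (U \<inter> B')"
            using B(3) unfolding countably_compact_at_def by blast
          from K[OF p] obtain m where m: "m \<in> topspace M"
            "\<forall>V. openin M V \<and> m \<in> V \<longrightarrow> infinite (B' \<inter> (UNIV \<times> V))" by blast
          show ?thesis
          proof (intro bexI allI impI)
            fix V assume V: "openin M V \<and> m \<in> V"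
            have "B' \<inter> (UNIV \<times> V) \<subseteq> (\<lambda>m. (None, m)) ` (V \<inter> S)" unfolding B'_def S1_def by blast
            then show "infinite (V \<inter> S)" using m(2) V by (meson finite_imageI finite_subset)
          qed (rule m(1))
        next
          assume inf2: "infinite S2"
          define g where "g s = (SOME d. d \<in> D \<and> \<pi> d = s)" for s
          have g: "g s \<in> D \<and> \<pi> (g s) = s" if sS2: "s \<in> S2" for s
          proof -
            obtain d where "d \<in> D" "\<pi> d = s" using sS2 unfolding S2_def by blast
            then show ?thesis unfolding g_def by (metis (mono_tags, lifting) someI)
          qed
          define B' where "B' = (\<lambda>s. (Some (g s), s)) ` S2"
          have "B' \<subseteq> B" unfolding B'_def
          proof (rule image_subsetI)
            fix s assume "s \<in> S2" then show "(Some (g s), s) \<in> B" using g inB by metis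
          qed
          moreover have "infinite B'" unfolding B'_def using inf2 by (simp add: finite_image_iff inj_on_def)
          ultimately obtain p where p: "p \<in> topspace X" "\<forall>U. openin X U \<and> p \<in> U \<longrightarrow> infinite (U \<inter> B')"
            using B(3) unfolding countably_compact_at_def by blast
          from K[OF p] obtain m where m: "m \<in> topspace M"
            "\<forall>V. openin M V \<and> m \<in> V \<longrightarrow> infinite (B' \<inter> (UNIV \<times> V))" by blast
          show ?thesis
          proof (intro bexI allI impI)
            fix V assume V: "openin M V \<and> m \<in> V"
            have "B' \<inter> (UNIV \<times> V) \<subseteq> (\<lambda>s. (Some (g s), s)) ` (V \<inter> S2)" unfolding B'_def by blast
            then have "infinite (V \<inter> S2)" using m(2) V by (meson finite_imageI finite_subset)
            then show "infinite (V \<inter> S)" by (rule infinite_super[rotated]) (auto simp: S2_def)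
          qed (rule m(1))
        qed
      qed
    qed
  next
    assume "\<exists>A. A \<subseteq> topspace M \<and> M closure_of A = topspace M \<and> \<pi> ` D \<subseteq> A \<and> countably_compact_at M A"
    then obtain A where A: "A \<subseteq> topspace M" "M closure_of A = topspace M" "\<pi> ` D \<subseteq> A"
      "countably_compact_at M A" by blast
    define B where "B = (\<lambda>x. (Some x, \<pi> x)) ` D \<union> ({None} \<times> A)"
    show "\<exists>B. B \<subseteq> topspace X \<and> X closure_of B = topspace X \<and> countably_compact_at X B"
    proof (intro exI conjI)
      show "B \<subseteq> topspace X" using A(1) unfolding tX B_def S0_def by blast
      show "X closure_of B = topspace X"
      proof (rule subset_antisym)
        show "X closure_of B \<subseteq> topspace X" by (rule closure_of_subset_topspace)
        show "topspace X \<subseteq> X closure_of B"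
        proof
          fix p assume p: "p \<in> topspace X"
          show "p \<in> X closure_of B" unfolding in_closure_of
          proof (intro conjI allI impI)
            show "p \<in> topspace X" by fact
            fix U assume U: "p \<in> U \<and> openin X U"
            from p consider d where "d \<in> D" "p = (Some d, \<pi> d)" | m where "m \<in> topspace M" "p = (None, m)"
              unfolding tX S0_def by blast
            then show "\<exists>y. y \<in> B \<and> y \<in> U"
            proof cases
              case 1 then show ?thesis using U unfolding B_def by blast
            next
              case 2
              obtain W V where WV: "openin T W" "openin M V" "p \<in> W \<times> V" "S0 \<inter> (W \<times> V) \<subseteq> U"
                using nb[of U p] U by blast
              have "m \<in> M closure_of A" using A(2) 2 by simp
              then obtain a where a: "a \<in> A" "a \<in> V" using WV 2 unfolding in_closure_of by blast
              have "(None, a) \<in> S0 \<inter> (W \<times> V)" using a WV 2 A(1) unfolding S0_def by blast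
              then show ?thesis using WV(4) a unfolding B_def by blast
            qed
          qed
        qed
      qed
      show "countably_compact_at X B" unfolding countably_compact_at_def
      proof (intro allI impI)
        fix B' assume B': "B' \<subseteq> B \<and> infinite B'"
        define E where "E = {d\<in>D. (Some d, \<pi> d) \<in> B'}"
        define N where "N = {a\<in>A. (None, a) \<in> B'}"
        have "B' \<subseteq> (\<lambda>x. (Some x, \<pi> x)) ` E \<union> (\<lambda>a. (None, a)) ` N"
          using B' unfolding E_def N_def B_def by blast
        then have "infinite E \<or> infinite N" using B' by (meson finite_UnI finite_imageI finite_subset)
        then show "\<exists>x\<in>topspace X. \<forall>U. openin X U \<and> x \<in> U \<longrightarrow> infinite (U \<inter> B')"
        proof
          assume iN: "infinite N"
          have "N \<subseteq> A" unfolding N_def by blast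
          then obtain m where m: "m \<in> topspace M" "\<forall>V. openin M V \<and> m \<in> V \<longrightarrow> infinite (V \<inter> N)"
            using A(4) iN unfolding countably_compact_at_def by blast
          show ?thesis
          proof (rule bexI[of _ "(None, m)"])
            show "(None, m) \<in> topspace X" using m(1) unfolding tX S0_def by blast
            show "\<forall>U. openin X U \<and> (None, m) \<in> U \<longrightarrow> infinite (U \<inter> B')"
            proof (rule Kc[OF m(1)])
              fix W V assume WV: "openin T W" "None \<in> W" "openin M V" "m \<in> V"
              then have "infinite (V \<inter> N)" using m(2) by blast
              then have "infinite ((\<lambda>a. (None, a)) ` (V \<inter> N))" by (simp add: finite_image_iff inj_on_def)
              moreover have "(\<lambda>a. (None, a)) ` (V \<inter> N) \<subseteq> S0 \<inter> (W \<times> V) \<inter> B'"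
                using WV(2) A(1) unfolding N_def S0_def by blast
              ultimately show "infinite (S0 \<inter> (W \<times> V) \<inter> B')" by (rule infinite_super[rotated])
            qed
          qed
        next
          assume iE: "infinite E"
          have main: "\<exists>x\<in>topspace X. \<forall>U. openin X U \<and> x \<in> U \<longrightarrow> infinite (U \<inter> B')"
            if mM: "m \<in> topspace M" and mE: "\<And>V. openin M V \<Longrightarrow> m \<in> V \<Longrightarrow> infinite {d\<in>E. \<pi> d \<in> V}" for m
          proof (rule bexI[of _ "(None, m)"])
            show "(None, m) \<in> topspace X" using mM unfolding tX S0_def by blast
            show "\<forall>U. openin X U \<and> (None, m) \<in> U \<longrightarrow> infinite (U \<inter> B')"
            proof (rule Kc[OF mM])
              fix W V assume WV: "openin T W" "None \<in> W" "openin M V" "m \<in> V"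
              have "finite {d\<in>D. Some d \<notin> W}" using alpha_open_None WV(1,2) unfolding T_def by blast
              then have "infinite ({d\<in>E. \<pi> d \<in> V} - {d\<in>D. Some d \<notin> W})"
                using mE[OF WV(3,4)] by (rule Diff_infinite_finite)
              then have "infinite ((\<lambda>x. (Some x, \<pi> x)) ` ({d\<in>E. \<pi> d \<in> V} - {d\<in>D. Some d \<notin> W}))"
                by (simp add: finite_image_iff inj_on_def)
              moreover have "(\<lambda>x. (Some x, \<pi> x)) ` ({d\<in>E. \<pi> d \<in> V} - {d\<in>D. Some d \<notin> W}) \<subseteq> S0 \<inter> (W \<times> V) \<inter> B'"
                unfolding E_def S0_def by blast
              ultimately show "infinite (S0 \<inter> (W \<times> V) \<inter> B')" by (rule infinite_super[rotated])
            qed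
          qed
          show ?thesis
          proof (cases "finite (\<pi> ` E)")
            case True
            obtain a0 where a0: "a0 \<in> E" "infinite {a\<in>E. \<pi> a = \<pi> a0}"
              using pigeonhole_infinite[OF iE True] by blast
            show ?thesis
            proof (rule main)
              show "\<pi> a0 \<in> topspace M" using a0(1) assms(2) unfolding E_def by blast
              fix V assume "openin M V" "\<pi> a0 \<in> V"
              then have "{a\<in>E. \<pi> a = \<pi> a0} \<subseteq> {d\<in>E. \<pi> d \<in> V}" by auto
              then show "infinite {d\<in>E. \<pi> d \<in> V}" using a0(2) infinite_super by blast
            qed
          next
            case False
            have "\<pi> ` E \<subseteq> A" using A(3) unfolding E_def by blast
            then obtain m where m: "m \<in> topspace M" "\<forall>V. openin M V \<and> m \<in> V \<longrightarrow> infinite (V \<inter> \<pi> ` E)"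
              using False A(4) unfolding countably_compact_at_def by blast
            show ?thesis
            proof (rule main[OF m(1)])
              fix V assume "openin M V" "m \<in> V"
              then have "infinite (V \<inter> \<pi> ` E)" using m(2) by blast
              moreover have "V \<inter> \<pi> ` E \<subseteq> \<pi> ` {d\<in>E. \<pi> d \<in> V}" by blast
              ultimately show "infinite {d\<in>E. \<pi> d \<in> V}" by (meson finite_imageI finite_subset)
            qed
          qed
        qed
      qed
    qed
  qed
qed

end
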